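(* Let $(X,d)$ be a proper metric space that admits a conical bicombing. Then there exists a bicombing $s\colon X\times X\times[0,1]\to X$ such that: (1) $s$ is consistent; (2) $s_{xy}(\cdot)$ is a straight geodesic for all $x,y\in X$; (3) the function $t\mapsto d(s_{xy}(t),s_{x'y'}(t))$ is convex on $[0,1]$ for all points $x,y,x',y'\in X$ with $d(x,y)=d(x',y')$.
   Context: A bicombing on $(X,d)$ is any map $\sigma\colon X\times X\times[0,1]\to X$ (no continuity required) such that each $\sigma_{xy}:=\sigma(x,y,\cdot)$ is a geodesic from $x$ to $y$, i.e. $\sigma_{xy}(0)=x$, $\sigma_{xy}(1)=y$, $d(\sigma_{xy}(s),\sigma_{xy}(t))=|s-t|d(x,y)$. It is conical if $d(\sigma_{xy}(t),\sigma_{x'y'}(t))\le(1-t)d(x,x')+t\,d(y,y')$ for all $x,y,x',y'\in X$, $t\in[0,1]$. A bicombing $\sigma$ is consistent if $\sigma_{pq}([0,1])\subset\sigma_{xy}([0,1])$ whenever $p,q\in\sigma_{xy}([0,1])$. A geodesic $c\colon[0,1]\to X$ is straight if $t\mapsto d(z,c(t))$ is convex on $[0,1]$ for every $z\in X$. A metric space is proper if closed bounded sets are compact. *)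

theory Defs
  imports "HOL-Analysis.Analysis"
begin

definition proper_space :: "'a::metric_space itself \<Rightarrow> bool" where
  "proper_space _ \<longleftrightarrow> (\<forall>S::'a set. closed S \<and> bounded S \<longrightarrow> compact S)"

definition geodesic01 :: "(real \<Rightarrow> 'a::metric_space) \<Rightarrow> 'a \<Rightarrow> 'a \<Rightarrow> bool" where
  "geodesic01 c x y \<longleftrightarrow> c 0 = x \<and> c 1 = y \<and>
     (\<forall>s\<in>{0..1}. \<forall>t\<in>{0..1}. dist (c s) (c t) = \<bar>s - t\<bar> * dist x y)"

definition bicombing :: "('a::metric_space \<Rightarrow> 'a \<Rightarrow> real \<Rightarrow> 'a) \<Rightarrow> bool" where
  "bicombing \<sigma> \<longleftrightarrow> (\<forall>x y. geodesic01 (\<sigma> x y) x y)"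

definition conical :: "('a::metric_space \<Rightarrow> 'a \<Rightarrow> real \<Rightarrow> 'a) \<Rightarrow> bool" where
  "conical \<sigma> \<longleftrightarrow> (\<forall>x y x' y'. \<forall>t\<in>{0..1}.
     dist (\<sigma> x y t) (\<sigma> x' y' t) \<le> (1 - t) * dist x x' + t * dist y y')"

definition consistent :: "('a::metric_space \<Rightarrow> 'a \<Rightarrow> real \<Rightarrow> 'a) \<Rightarrow> bool" where
  "consistent \<sigma> \<longleftrightarrow> (\<forall>x y p q. p \<in> \<sigma> x y ` {0..1} \<and> q \<in> \<sigma> x y ` {0..1} \<longrightarrow>
     \<sigma> p q ` {0..1} \<subseteq> \<sigma> x y ` {0..1})"

definition straight :: "(real \<Rightarrow> 'a::metric_space) \<Rightarrow> bool" where
  "straight c \<longleftrightarrow> (\<forall>z. convex_on {0..1} (\<lambda>t. dist z (c t)))"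

end

theory Submission
  imports Defs
begin

lemma subharm:
  fixes v :: "nat \<Rightarrow> real" and m :: nat
  assumes m: "0 < m" and sh: "\<And>i. 0 < i \<Longrightarrow> i < m \<Longrightarrow> 2 * v i \<le> v (i-1) + v (i+1)" and i: "i \<le> m"
  shows "v i \<le> ((real m - real i) * v 0 + real i * v m) / real m"
proof -
  define L where "L j = ((real m - real j) * v 0 + real j * v m)/real m" for j
  define w where "w j = v j - L j" for j
  have w0: "w 0 = 0" and wm: "w m = 0" using m by (auto simp: w_def L_def field_simps)
  have wsh: "2 * w j \<le> w (j-1) + w (j+1)" if "0<j" "j<m" for j
  proof -
    have "real (j-1) = real j - 1" using that by (simp add: of_nat_diff)
    then have "L (j-1) + L (j+1) = 2 * L j"
      using m unfolding L_def by (simp add: field_simps)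
    then show ?thesis using sh[OF that] unfolding w_def by argo
  qed
  have "w i \<le> 0"
  proof (rule ccontr)
    assume neg: "\<not> w i \<le> 0"
    define W where "W = Max (w ` {0..m})"
    have fin: "finite (w ` {0..m})" by simp
    have le: "w j \<le> W" if "j \<le> m" for j unfolding W_def using fin that by (intro Max_ge) auto
    have Wpos: "W > 0" using le[OF i] neg by linarith
    have "W \<in> w ` {0..m}" unfolding W_def using fin by (intro Max_in) auto
    then obtain j where j: "j \<le> m" "w j = W" by auto
    define j0 where "j0 = (LEAST j. j \<le> m \<and> w j = W)"
    have j0: "j0 \<le> m \<and> w j0 = W" unfolding j0_def by (rule LeastI[of _ j]) (use j in auto)
    have nl: "\<not> (j \<le> m \<and> w j = W)" if "j < j0" for j using not_less_Least[OF that[unfolded j0_def]] unfolding j0_def .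
    have "j0 \<noteq> 0"
    proof
      assume "j0 = 0" then show False using j0 w0 Wpos by simp
    qed
    moreover have "j0 \<noteq> m"
    proof
      assume "j0 = m" then show False using j0 wm Wpos by simp
    qed
    ultimately have "0 < j0" "j0 < m" using j0 by auto
    then have "w (j0-1) < W" using nl[of "j0-1"] le[of "j0-1"] by force
    moreover have "w (j0+1) \<le> W" using le \<open>j0 < m\<close> by simp
    ultimately show False using wsh[OF \<open>0<j0\<close> \<open>j0<m\<close>] j0 by linarith
  qed
  then show ?thesis unfolding w_def L_def by simp
qed

locale cb =
  fixes \<sigma> :: "'a::metric_space \<Rightarrow> 'a \<Rightarrow> real \<Rightarrow> 'a"
  assumes bic: "bicombing \<sigma>" and con: "conical \<sigma>" and prp: "proper_space TYPE('a)"
begin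

definition nu :: "'a \<Rightarrow> 'a \<Rightarrow> 'a" where "nu a b = \<sigma> a b (1/2)"
definition mu :: "nat \<Rightarrow> 'a \<Rightarrow> 'a \<Rightarrow> 'a" where "mu k a b = (if odd k then nu a b else nu b a)"
definition disc :: "nat \<Rightarrow> nat \<Rightarrow> 'a \<Rightarrow> 'a \<Rightarrow> (nat \<Rightarrow> 'a) \<Rightarrow> bool" where
  "disc k m u v p \<longleftrightarrow> p 0 = u \<and> p m = v \<and> (\<forall>i. 0 < i \<and> i < m \<longrightarrow> p i = mu (k+i) (p (i-1)) (p (i+1)))"

lemma nu_d1: "dist a (nu a b) = dist a b / 2"
proof -
  have g: "geodesic01 (\<sigma> a b) a b" using bic by (simp add: bicombing_def)
  then have "\<forall>s\<in>{0..1}. \<forall>t\<in>{0..1}. dist (\<sigma> a b s) (\<sigma> a b t) = \<bar>s - t\<bar> * dist a b" unfolding geodesic01_def by auto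
  then have "dist (\<sigma> a b 0) (\<sigma> a b (1/2)) = \<bar>0 - 1/2\<bar> * dist a b" by simp
  moreover have "\<sigma> a b 0 = a" using g by (simp add: geodesic01_def)
  ultimately show ?thesis by (simp add: nu_def)
qed

lemma nu_d2: "dist (nu a b) b = dist a b / 2"
proof -
  have g: "geodesic01 (\<sigma> a b) a b" using bic by (simp add: bicombing_def)
  then have "\<forall>s\<in>{0..1}. \<forall>t\<in>{0..1}. dist (\<sigma> a b s) (\<sigma> a b t) = \<bar>s - t\<bar> * dist a b" unfolding geodesic01_def by auto
  then have "dist (\<sigma> a b (1/2)) (\<sigma> a b 1) = \<bar>1/2 - 1\<bar> * dist a b" by simp
  moreover have "\<sigma> a b 1 = b" using g by (simp add: geodesic01_def)
  ultimately show ?thesis by (simp add: nu_def)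
qed

lemma nu_lip: "dist (nu a b) (nu a' b') \<le> (dist a a' + dist b b') / 2"
proof -
  have "\<forall>t\<in>{0..1}. dist (\<sigma> a b t) (\<sigma> a' b' t) \<le> (1 - t) * dist a a' + t * dist b b'"
    using con unfolding conical_def by blast
  then have "dist (\<sigma> a b (1/2)) (\<sigma> a' b' (1/2)) \<le> (1 - 1/2) * dist a a' + 1/2 * dist b b'" by (rule bspec) auto
  then show ?thesis by (simp add: nu_def)
qed

lemma nu_self: "nu a a = a"
  using nu_d1[of a a] by simp

lemma mu_lip: "dist (mu k a b) (mu k a' b') \<le> (dist a a' + dist b b') / 2"
  using nu_lip[of a b a' b'] nu_lip[of b a b' a'] by (auto simp: mu_def)

lemma mu_self: "mu k a a = a" by (simp add: mu_def nu_self)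

lemma mu_par: "odd (j + j') \<Longrightarrow> mu j a b = mu j' b a"
  by (auto simp: mu_def)

lemma disc_cmp:
  assumes p: "disc k m u v p" and q: "disc k m u' v' q" and m: "0 < m" and i: "i \<le> m"
  shows "dist (p i) (q i) \<le> ((real m - real i) * dist u u' + real i * dist v v') / real m"
proof -
  have "dist (p i) (q i) \<le> ((real m - real i) * dist (p 0) (q 0) + real i * dist (p m) (q m)) / real m"
  proof (rule subharm[OF m _ i])
    fix j assume j: "0 < j" "j < m"
    have "dist (p j) (q j) = dist (mu (k+j) (p (j-1)) (p (j+1))) (mu (k+j) (q (j-1)) (q (j+1)))"
      using p q j unfolding disc_def by auto
    also have "\<dots> \<le> (dist (p (j-1)) (q (j-1)) + dist (p (j+1)) (q (j+1))) / 2" by (rule mu_lip)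
    finally show "2 * dist (p j) (q j) \<le> dist (p (j-1)) (q (j-1)) + dist (p (j+1)) (q (j+1))" by simp
  qed
  then show ?thesis using p q unfolding disc_def by simp
qed

lemma disc_const: "disc k m z z (\<lambda>_. z)"
  by (simp add: disc_def mu_self)

lemma disc_pt:
  assumes p: "disc k m u v p" and m: "0 < m" and i: "i \<le> m"
  shows "dist (p i) z \<le> ((real m - real i) * dist u z + real i * dist v z) / real m"
  using disc_cmp[OF p disc_const m i] by simp

lemma disc_shift:
  assumes p: "disc k m u v p" and ij: "i \<le> j" "j \<le> m"
  shows "disc (k+i) (j-i) (p i) (p j) (\<lambda>l. p (l+i))"
  unfolding disc_def
proof (intro conjI allI impI)
  fix l assume l: "0 < l \<and> l < j - i"
  then have "p (l+i) = mu (k+(l+i)) (p (l+i-1)) (p (l+i+1))" using p ij unfolding disc_def by auto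
  moreover have "l + i - 1 = l - 1 + i" using l by simp
  ultimately show "p (l+i) = mu (k + i + l) (p (l - 1 + i)) (p (l + 1 + i))" by (simp add: ac_simps)
qed (use ij in auto)

lemma disc_geo:
  assumes p: "disc k m u v p" and m: "0 < m" and ij: "i \<le> j" "j \<le> m"
  shows "dist (p i) (p j) = real (j-i) * dist u v / real m"
proof -
  define D where "D = dist u v"
  have D0: "D \<ge> 0" by (simp add: D_def)
  have a: "dist (p i) u \<le> real i * D / real m"
    using disc_pt[OF p m, of i u] ij by (simp add: D_def dist_commute)
  have b: "dist (p j) v \<le> (real m - real j) * D / real m"
    using disc_pt[OF p m, of j v] ij by (simp add: D_def)
  have b': "dist v (p i) \<le> (real m - real i) * D / real m"
    using disc_pt[OF p m, of i v] ij by (simp add: D_def dist_commute)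
  have up: "dist (p i) (p j) \<le> real (j-i) * D / real m"
  proof (cases "i = m")
    case True then show ?thesis using ij by simp
  next
    case False
    then have im: "i < m" using ij by simp
    have Q: "disc (k+i) (m-i) (p i) (p m) (\<lambda>l. p (l+i))" by (rule disc_shift[OF p]) (use ij in auto)
    have pm: "p m = v" using p by (simp add: disc_def)
    have "dist (p (j - i + i)) (p i) \<le> ((real (m-i) - real (j-i)) * dist (p i) (p i) + real (j-i) * dist v (p i)) / real (m-i)"
      using disc_pt[OF Q, of "j-i" "p i"] im ij pm by simp
    also have "\<dots> = real (j-i) * dist v (p i) / real (m-i)" by simp
    also have "\<dots> \<le> real (j-i) * ((real m - real i) * D / real m) / real (m-i)"
      by (intro divide_right_mono mult_left_mono b') auto
    also have "\<dots> = real (j-i) * D / real m" using im m by (simp add: of_nat_diff field_simps)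
    finally show ?thesis using ij by (simp add: dist_commute)
  qed
  have "D \<le> dist u (p i) + dist (p i) (p j) + dist (p j) v"
    unfolding D_def by (metis add.commute add_left_mono dist_triangle order_trans)
  then have "D \<le> real i * D / real m + dist (p i) (p j) + (real m - real j) * D / real m"
    using a b by (simp add: dist_commute)
  moreover have "D - real i * D / real m - (real m - real j) * D / real m = real (j-i) * D / real m"
    using m ij by (simp add: of_nat_diff field_simps)
  ultimately have "real (j-i) * D / real m \<le> dist (p i) (p j)" by linarith
  then show ?thesis using up D_def by simp
qed

lemma disc_rev:
  assumes p: "disc k m u v p"
  shows "disc (k+m+1) m v u (\<lambda>l. p (m-l))"
  unfolding disc_def
proof (intro conjI allI impI)
  fix l assume l: "0 < l \<and> l < m"
  then have "p (m-l) = mu (k+(m-l)) (p (m-l-1)) (p (m-l+1))" using p unfolding disc_def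
    by (metis diff_less le_add_diff_inverse2 less_imp_le_nat nat_less_le zero_less_diff add_diff_cancel_left')
  moreover have "m - (l-1) = m-l+1" "m - (l+1) = m-l-1" using l by auto
  moreover have "(k+m+1+l) + (k+(m-l)) = 2*(k+m)+1" using l by simp
  then have "odd ((k+m+1+l) + (k+(m-l)))" by presburger
  ultimately show "p (m - l) = mu (k + m + 1 + l) (p (m - (l - 1))) (p (m - (l + 1)))"
    using mu_par by metis
qed (use p in \<open>auto simp: disc_def\<close>)

end

context cb begin

lemma cball_compact: "compact (cball (a::'a) r)"
  using prp unfolding proper_space_def by auto

lemma geo_conv:
  fixes f :: "nat \<Rightarrow> 'a"
  assumes step: "\<And>n. dist (f (Suc n)) (f n) \<le> K * c^n" and c: "0 \<le> c" "c < 1"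
  shows "\<exists>l. f \<longlonglongrightarrow> l"
proof -
  have "dist (f (Suc 0)) (f 0) \<le> K" using step[of 0] by simp
  then have K0: "0 \<le> K" using zero_le_dist[of "f (Suc 0)" "f 0"] by linarith
  have tel: "dist (f (n+d)) (f n) \<le> K * (c^n - c^(n+d)) / (1-c)" for n d
  proof (induction d)
    case 0 then show ?case by simp
  next
    case (Suc d)
    have "dist (f (n + Suc d)) (f n) \<le> dist (f (Suc (n+d))) (f (n+d)) + dist (f (n+d)) (f n)"
      using dist_triangle by simp
    also have "\<dots> \<le> K * c^(n+d) + K * (c^n - c^(n+d)) / (1-c)" using step[of "n+d"] Suc by linarith
    also have "\<dots> = K * (c^n - c^(n + Suc d)) / (1-c)" using c by (simp add: field_simps)
    finally show ?case .
  qed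
  have tel2: "dist (f (n+d)) (f n) \<le> K * c^n / (1-c)" for n d
  proof -
    have "K * (c^n - c^(n+d)) \<le> K * c^n" using K0 c by (simp add: mult_left_mono)
    then have "K * (c^n - c^(n+d)) / (1-c) \<le> K * c^n / (1-c)" using c by (simp add: divide_right_mono)
    then show ?thesis using tel[of n d] by linarith
  qed
  have inb: "f n \<in> cball (f 0) (K / (1-c))" for n
    using tel2[of 0 n] by (simp add: dist_commute)
  have "Cauchy f"
    unfolding Cauchy_altdef2
  proof (intro allI impI)
    fix e :: real assume e: "0 < e"
    obtain N where N: "c^N < e * (1-c) / (K+1)"
      using real_arch_pow_inv[of "e * (1-c) / (K+1)" c] e c K0 by auto
    have "K * c^N \<le> (K+1) * c^N" using c by (intro mult_right_mono) auto
    also have "\<dots> < e * (1-c)" using N K0 by (simp add: field_simps)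
    finally have "K * c^N / (1-c) < e" using c by (simp add: field_simps)
    moreover have "dist (f n) (f N) \<le> K * c^N / (1-c)" if "n \<ge> N" for n
      using tel2[of N "n-N"] that by simp
    ultimately show "\<exists>N. \<forall>n\<ge>N. dist (f n) (f N) < e" by (meson le_less_trans)
  qed
  then obtain l where "f \<longlonglongrightarrow> l"
    using completeE[OF compact_imp_complete[OF cball_compact] ] inb by metis
  then show ?thesis by blast
qed

lemma disc_ex:
  assumes m: "0 < m" shows "\<exists>p. disc k m u v p"
proof -
  define \<Phi> where "\<Phi> p = (\<lambda>i. if 0 < i \<and> i < m then mu (k+i) (p (i-1)) (p (i+1)) else p i)" for p
  define it where "it n = (\<Phi> ^^ n) (\<lambda>i. if i = 0 then u else v)" for n
  have itS: "it (Suc n) = \<Phi> (it n)" for n by (simp add: it_def)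
  have bd: "it n i = (if i = 0 then u else v)" if "\<not> (0 < i \<and> i < m)" for n i
    using that by (induction n) (auto simp: it_def \<Phi>_def)
  define c :: real where "c = 1 - 1 / (real m)^2"
  define w where "w i = real i * real (m - i)" for i
  define R where "R = (\<Sum>i\<le>m. dist (it 1 i) (it 0 i))"
  have R0: "0 \<le> R" unfolding R_def by (simp add: sum_nonneg)
  have c0: "0 \<le> c" using m unfolding c_def by (simp add: field_simps)
  have c1: "c < 1" using m unfolding c_def by simp
  have w0: "0 \<le> w i" for i by (simp add: w_def)
  have key: "dist (it (Suc n) i) (it n i) \<le> R * c^n * w i" for n i
  proof (induction n arbitrary: i)
    case 0
    show ?case
    proof (cases "0 < i \<and> i < m")
      case True
      have "dist (it 1 i) (it 0 i) \<le> R" unfolding R_def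
        by (rule member_le_sum) (use True in auto)
      also have "\<dots> \<le> R * w i"
      proof -
        have "1 \<le> w i" using True unfolding w_def
          by (metis One_nat_def Suc_leI mult_le_cancel_left1 nat_less_le of_nat_1 of_nat_le_iff of_nat_mult one_le_mult_iff zero_less_diff)
        then show ?thesis using R0 by (metis mult_le_cancel_left1 not_less order.strict_trans2)
      qed
      finally show ?thesis by simp
    next
      case False
      then show ?thesis using bd[OF False, of 1] bd[OF False, of 0] R0 w0 by simp
    qed
  next
    case (Suc n)
    show ?case
    proof (cases "0 < i \<and> i < m")
      case True
      have "dist (it (Suc (Suc n)) i) (it (Suc n) i)
          = dist (mu (k+i) (it (Suc n) (i-1)) (it (Suc n) (i+1))) (mu (k+i) (it n (i-1)) (it n (i+1)))"
        using True by (simp add: itS \<Phi>_def)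
      also have "\<dots> \<le> (dist (it (Suc n) (i-1)) (it n (i-1)) + dist (it (Suc n) (i+1)) (it n (i+1))) / 2"
        by (rule mu_lip)
      also have "\<dots> \<le> (R * c^n * w (i-1) + R * c^n * w (i+1)) / 2"
        using Suc[of "i-1"] Suc[of "i+1"] by simp
      also have "\<dots> = R * c^n * (w i - 1)"
      proof -
        have "w (i-1) + w (i+1) = 2 * w i - 2" using True unfolding w_def
          by (simp add: of_nat_diff algebra_simps)
        have "(R * c^n * w (i-1) + R * c^n * w (i+1)) / 2 = R * c^n * (w (i-1) + w (i+1)) / 2"
          by (simp add: algebra_simps)
        also have "\<dots> = R * c^n * (w i - 1)" unfolding \<open>w (i-1) + w (i+1) = 2 * w i - 2\<close> by simp
        finally show ?thesis .
      qed
      also have "\<dots> \<le> R * c^n * (c * w i)"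
      proof (rule mult_left_mono)
        have "w i \<le> (real m)^2" unfolding w_def power2_eq_square
          using True by (intro mult_mono) auto
        then have "w i / (real m)^2 \<le> 1" using m by simp
        then show "w i - 1 \<le> c * w i" unfolding c_def by (simp add: algebra_simps)
      qed (use R0 c0 in simp)
      also have "\<dots> = R * c ^ Suc n * w i" by simp
      finally show ?thesis .
    next
      case False
      then show ?thesis using bd[OF False, of "Suc (Suc n)"] bd[OF False, of "Suc n"] R0 w0 c0 by simp
    qed
  qed
  have conv: "\<exists>l. (\<lambda>n. it n i) \<longlonglongrightarrow> l" for i
    by (rule geo_conv[of _ "R * w i" c]) (use key c0 c1 in \<open>auto simp: ac_simps\<close>)
  define p where "p i = lim (\<lambda>n. it n i)" for i
  have pl: "(\<lambda>n. it n i) \<longlonglongrightarrow> p i" for i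
    using conv[of i] unfolding p_def by (metis limI)
  show ?thesis
  proof (intro exI)
    show "disc k m u v p" unfolding disc_def
    proof (intro conjI allI impI)
      show "p 0 = u" using pl[of 0] bd[of 0] by (simp add: LIMSEQ_const_iff)
      show "p m = v" using pl[of m] bd[of m] m by (simp add: LIMSEQ_const_iff)
      fix i assume i: "0 < i \<and> i < m"
      have A: "(\<lambda>n. it (Suc n) i) \<longlonglongrightarrow> p i" using pl[of i] by (rule LIMSEQ_Suc)
      define q where "q = mu (k+i) (p (i-1)) (p (i+1))"
      define g where "g n = (dist (it n (i-1)) (p (i-1)) + dist (it n (i+1)) (p (i+1))) / 2" for n
      have g1: "(\<lambda>n. dist (it n (i-1)) (p (i-1))) \<longlonglongrightarrow> 0" by (rule tendsto_dist_iff[THEN iffD1, OF pl])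
      have g2: "(\<lambda>n. dist (it n (i+1)) (p (i+1))) \<longlonglongrightarrow> 0" by (rule tendsto_dist_iff[THEN iffD1, OF pl])
      have "(\<lambda>n. (dist (it n (i-1)) (p (i-1)) + dist (it n (i+1)) (p (i+1))) / 2) \<longlonglongrightarrow> (0 + 0) / 2"
        by (rule tendsto_divide[OF tendsto_add[OF g1 g2] tendsto_const]) simp
      then have gl: "g \<longlonglongrightarrow> 0" unfolding g_def by simp
      have le: "dist (it (Suc n) i) q \<le> g n" for n
      proof -
        have "it (Suc n) i = mu (k+i) (it n (i-1)) (it n (i+1))" using i by (simp add: itS \<Phi>_def)
        then show ?thesis unfolding q_def g_def using mu_lip by metis
      qed
      have "(\<lambda>n. dist (it (Suc n) i) q) \<longlonglongrightarrow> 0"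
        by (rule tendsto_sandwich[of "\<lambda>_. 0" _ _ g]) (use le gl in auto)
      then have B: "(\<lambda>n. it (Suc n) i) \<longlonglongrightarrow> q" by (rule tendsto_dist_iff[THEN iffD2])
      show "p i = mu (k + i) (p (i - 1)) (p (i + 1))" using LIMSEQ_unique[OF A B] unfolding q_def .
    qed
  qed
qed

end

lemma cluster_exists:
  fixes F :: "nat \<Rightarrow> 'i \<Rightarrow> 'b::metric_space" and K :: "'i \<Rightarrow> 'b set"
  assumes K: "\<And>i. compact (K i)" and FK: "\<And>n i. F n i \<in> K i"
  shows "\<exists>g. \<forall>\<epsilon>>0. \<forall>N. \<forall>z1 z2 z3 z4. \<exists>n\<ge>N. dist (F n z1) (g z1) < \<epsilon> \<and> dist (F n z2) (g z2) < \<epsilon>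
            \<and> dist (F n z3) (g z3) < \<epsilon> \<and> dist (F n z4) (g z4) < \<epsilon>"
proof -
  define S where "S = PiE UNIV K"
  have "compactin (product_topology (\<lambda>_. euclidean) UNIV) S"
    unfolding S_def by (simp add: compactin_PiE K)
  then have cS: "compact S" by (simp add: euclidean_product_topology)
  define Fl where "Fl = filtermap F sequentially"
  have Fl: "Fl \<noteq> bot" unfolding Fl_def by (simp add: filtermap_bot_iff)
  have ev: "eventually (\<lambda>x. x \<in> S) Fl" unfolding Fl_def S_def eventually_filtermap
    using FK by (simp add: PiE_UNIV_domain)
  obtain g where g: "g \<in> S" "inf (nhds g) Fl \<noteq> bot"
    using cS[unfolded compact_filter] Fl ev by blast
  show ?thesis
  proof (rule exI[of _ g], intro allI impI)
    fix \<epsilon> :: real and N :: nat and z1 z2 z3 z4 :: 'i assume e: "\<epsilon> > 0"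
    define zz where "zz i = (if i = (1::nat) then z1 else if i = 2 then z2 else if i = 3 then z3 else z4)" for i
    define U where "U = {f. \<forall>i\<in>{1,2,3,4::nat}. f (zz i) \<in> ball (g (zz i)) \<epsilon>}"
    have oU: "open U" unfolding U_def by (rule product_topology_basis') auto
    have gU: "g \<in> U" unfolding U_def using e by auto
    have "\<exists>n\<ge>N. F n \<in> U"
    proof (rule ccontr)
      assume "\<not> (\<exists>n\<ge>N. F n \<in> U)"
      then have e1: "eventually (\<lambda>f. f \<notin> U) Fl" unfolding Fl_def eventually_filtermap eventually_sequentially
        by auto
      have e2: "eventually (\<lambda>f. f \<in> U) (nhds g)" using oU gU by (rule eventually_nhds_in_open)
      have "eventually (\<lambda>_. False) (inf (nhds g) Fl)"
        unfolding eventually_inf using e1 e2 by blast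
      then show False using g(2) by (simp add: eventually_False)
    qed
    then obtain n where "n \<ge> N" "F n \<in> U" by blast
    then show "\<exists>n\<ge>N. dist (F n z1) (g z1) < \<epsilon> \<and> dist (F n z2) (g z2) < \<epsilon>
            \<and> dist (F n z3) (g z3) < \<epsilon> \<and> dist (F n z4) (g z4) < \<epsilon>"
      unfolding U_def zz_def by (auto simp: dist_commute)
  qed
qed

lemma lim_le:
  fixes X B C :: real
  assumes h: "\<And>\<epsilon> N. \<epsilon> > 0 \<Longrightarrow> \<exists>n\<ge>N. X \<le> B + \<epsilon> + C / real (Suc n)"
  shows "X \<le> B"
proof (rule ccontr)
  assume "\<not> X \<le> B"
  then have d: "X - B > 0" by simp
  obtain N :: nat where N: "real N > 2 * \<bar>C\<bar> / (X - B)" using reals_Archimedean2 by blast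
  obtain n where n: "n \<ge> N" "X \<le> B + (X - B)/2 + C / real (Suc n)" using h[of "(X-B)/2" N] d by auto
  have "C / real (Suc n) \<le> \<bar>C\<bar> / real (Suc n)" by (simp add: divide_right_mono)
  also have "\<dots> < (X - B) / 2"
  proof -
    have "2 * \<bar>C\<bar> < (X - B) * real N" using N d by (simp add: field_simps)
    also have "\<dots> \<le> (X - B) * real (Suc n)" using n d by (intro mult_left_mono) auto
    finally show ?thesis by (simp add: field_simps)
  qed
  finally show False using n by argo
qed


context cb begin

lemma disc_par:
  assumes p: "disc k m u v p" and par: "even (k + k')"
  shows "disc k' m u v p"
proof -
  have "mu (k+i) = mu (k'+i)" for i
  proof -
    have "odd (k+i) = odd (k'+i)" using par by presburger
    then show ?thesis by (auto simp: mu_def fun_eq_iff)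
  qed
  then show ?thesis using p by (simp add: disc_def)
qed

lemma disc_geo_abs:
  assumes p: "disc k m u v p" and m: "0 < m" and ij: "i \<le> m" "j \<le> m"
  shows "dist (p i) (p j) = \<bar>real i - real j\<bar> * dist u v / real m"
proof (cases "i \<le> j")
  case True
  then show ?thesis using disc_geo[OF p m True ij(2)] by (simp add: of_nat_diff)
next
  case False
  then show ?thesis using disc_geo[OF p m _ ij(1), of j] by (simp add: of_nat_diff dist_commute)
qed

lemma cross1:
  assumes p: "disc k m u v p" and T: "disc k' M u' v' T" and m: "0 < m"
    and e: "e \<le> 1" "m + e \<le> M" and par: "even (k' + e + k)" and l: "l \<le> m"
  shows "dist (p l) (T (l+e)) \<le> dist u u' + dist v v' + (real M - real m + 1) * (dist u' v' / real M)"
proof -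
  have M: "0 < M" using m e by simp
  have T': "disc (k'+e) m (T e) (T (m+e)) (\<lambda>j. T (j+e))" using disc_shift[OF T, of e "m+e"] e by simp
  have T'': "disc k m (T e) (T (m+e)) (\<lambda>j. T (j+e))" by (rule disc_par[OF T']) (use par in simp)
  define A where "A = dist u (T e)"
  define B where "B = dist v (T (m+e))"
  have A0: "0 \<le> A" and B0: "0 \<le> B" by (simp_all add: A_def B_def)
  have "dist (p l) (T (l+e)) \<le> ((real m - real l) * A + real l * B) / real m"
    using disc_cmp[OF p T'' m l] by (simp add: A_def B_def)
  also have "\<dots> \<le> (real m * A + real m * B) / real m"
    using A0 B0 l by (intro divide_right_mono add_mono mult_right_mono) auto
  also have "\<dots> = A + B" using m by (simp add: field_simps)
  finally have 1: "dist (p l) (T (l+e)) \<le> A + B" .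
  have T0: "T 0 = u'" and TM: "T M = v'" using T by (auto simp: disc_def)
  have "A \<le> dist u u' + dist u' (T e)" unfolding A_def by (rule dist_triangle)
  also have "dist u' (T e) = real e * dist u' v' / real M"
    using disc_geo[OF T M, of 0 e] e T0 by simp
  finally have 2: "A \<le> dist u u' + real e * dist u' v' / real M" .
  have "B \<le> dist v v' + dist v' (T (m+e))" unfolding B_def by (rule dist_triangle)
  also have "dist v' (T (m+e)) = real (M - (m+e)) * dist u' v' / real M"
    using disc_geo[OF T M, of "m+e" M] e TM by (simp add: dist_commute)
  finally have 3: "B \<le> dist v v' + real (M - (m+e)) * dist u' v' / real M" .
  have "real e * dist u' v' / real M + real (M - (m+e)) * dist u' v' / real M
      = (real M - real m) * (dist u' v' / real M)" using e M by (simp add: of_nat_diff field_simps)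
  also have "\<dots> \<le> (real M - real m + 1) * (dist u' v' / real M)"
    using M by (intro mult_right_mono) auto
  finally show ?thesis using 1 2 3 by linarith
qed

lemma cross:
  assumes p: "disc k m u v p" and r: "disc k' m' u' v' r" and m: "0 < m" "0 < m'"
    and l: "l \<le> m" "l' \<le> m'"
  shows "dist (p l) (r l') \<le> dist u u' + dist v v'
     + (\<bar>real m - real m'\<bar> + \<bar>real l - real l'\<bar> + 6) * (dist u' v' / real m')"
proof -
  define Ms where "Ms = max m m' + 1"
  obtain T where T: "disc 0 Ms u' v' T" using disc_ex[of Ms 0 u' v'] unfolding Ms_def by auto
  define e :: nat where "e = (if even k then 0 else 1)"
  define e' :: nat where "e' = (if even k' then 0 else 1)"
  have e1: "e \<le> 1" "m + e \<le> Ms" "even (0 + e + k)" by (auto simp: e_def Ms_def)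
  have e2: "e' \<le> 1" "m' + e' \<le> Ms" "even (0 + e' + k')" by (auto simp: e'_def Ms_def)
  define q where "q = dist u' v' / real Ms"
  have h1: "dist (p l) (T (l+e)) \<le> dist u u' + dist v v' + (real Ms - real m + 1) * q"
    unfolding q_def by (rule cross1[OF p T m(1) e1 l(1)])
  have h2: "dist (r l') (T (l'+e')) \<le> dist u' u' + dist v' v' + (real Ms - real m' + 1) * q"
    unfolding q_def by (rule cross1[OF r T m(2) e2 l(2)])
  have h3: "dist (T (l+e)) (T (l'+e')) = \<bar>real (l+e) - real (l'+e')\<bar> * q"
    unfolding q_def using disc_geo_abs[OF T _ , of "l+e" "l'+e'"] e1 e2 l by (simp add: Ms_def)
  have "dist (p l) (r l') \<le> dist (p l) (T (l+e)) + dist (T (l+e)) (T (l'+e')) + dist (r l') (T (l'+e'))"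
  proof -
    have t1: "dist (p l) (r l') \<le> dist (p l) (T (l+e)) + dist (T (l+e)) (r l')" by (rule dist_triangle)
    have t2: "dist (T (l+e)) (r l') \<le> dist (T (l+e)) (T (l'+e')) + dist (T (l'+e')) (r l')" by (rule dist_triangle)
    have t3: "dist (T (l'+e')) (r l') = dist (r l') (T (l'+e'))" by (rule dist_commute)
    show ?thesis using t1 t2 t3 by linarith
  qed
  also have "\<dots> \<le> dist u u' + dist v v' + ((real Ms - real m + 1) + \<bar>real (l+e) - real (l'+e')\<bar> + (real Ms - real m' + 1)) * q"
    using h1 h2 h3 by (simp add: algebra_simps)
  also have "\<dots> \<le> dist u u' + dist v v' + (\<bar>real m - real m'\<bar> + \<bar>real l - real l'\<bar> + 6) * (dist u' v' / real m')"
  proof -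
    have q0: "0 \<le> q" by (simp add: q_def)
    have qq: "q \<le> dist u' v' / real m'" unfolding q_def using m
      by (intro divide_left_mono) (auto simp: Ms_def)
    have "(real Ms - real m + 1) + \<bar>real (l+e) - real (l'+e')\<bar> + (real Ms - real m' + 1)
        \<le> \<bar>real m - real m'\<bar> + \<bar>real l - real l'\<bar> + 6"
      using e1 e2 by (simp add: Ms_def max_def)
    then have "((real Ms - real m + 1) + \<bar>real (l+e) - real (l'+e')\<bar> + (real Ms - real m' + 1)) * q
        \<le> (\<bar>real m - real m'\<bar> + \<bar>real l - real l'\<bar> + 6) * q" using q0 by (rule mult_right_mono)
    also have "\<dots> \<le> (\<bar>real m - real m'\<bar> + \<bar>real l - real l'\<bar> + 6) * (dist u' v' / real m')"
      using qq by (intro mult_left_mono) auto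
    finally show ?thesis by simp
  qed
  finally show ?thesis .
qed

end

context cb begin

definition Mn :: "nat \<Rightarrow> 'a \<Rightarrow> 'a \<Rightarrow> nat" where "Mn n x y = nat \<lceil>real (Suc n) * dist x y\<rceil>"
definition PP :: "nat \<Rightarrow> 'a \<Rightarrow> 'a \<Rightarrow> nat \<Rightarrow> 'a" where "PP n x y = (SOME p. disc 0 (Mn n x y) x y p)"
definition idx :: "nat \<Rightarrow> real \<Rightarrow> nat" where "idx M t = min M (nat \<lfloor>t * real M\<rfloor>)"
definition FF :: "nat \<Rightarrow> 'a \<times> 'a \<times> real \<Rightarrow> 'a" where
  "FF n z = (case z of (x,y,t) \<Rightarrow> PP n x y (idx (Mn n x y) t))"

lemma Mn_real: "real (Mn n x y) = of_int \<lceil>real (Suc n) * dist x y\<rceil>"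
proof -
  have h: "0 \<le> real (Suc n) * dist x y" by simp
  have c: "(0::int) \<le> \<lceil>real (Suc n) * dist x y\<rceil>" using ceiling_mono[OF h] by simp
  show ?thesis unfolding Mn_def using c by (rule of_nat_nat)
qed

lemma Mn_ge: "real (Suc n) * dist x y \<le> real (Mn n x y)"
  unfolding Mn_real by simp

lemma Mn_lt: "real (Mn n x y) < real (Suc n) * dist x y + 1"
  unfolding Mn_real using ceiling_correct[of "real (Suc n) * dist x y"] by linarith

lemma Mn_sym: "Mn n x y = Mn n y x" by (simp add: Mn_def dist_commute)

lemma Mn_0: "Mn n x x = 0" by (simp add: Mn_def)

lemma Mn_pos: assumes "x \<noteq> y" shows "0 < Mn n x y"
proof -
  have "0 < real (Suc n) * dist x y" using assms by simp
  then have "0 < real (Mn n x y)" using Mn_ge[of n x y] by linarith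
  then show ?thesis by simp
qed

lemma DM: assumes xy: "x \<noteq> y" shows "dist x y / real (Mn n x y) \<le> 1 / real (Suc n)"
proof -
  have M: "real (Mn n x y) > 0" using Mn_pos[OF xy] by simp
  have "dist x y = (1 / real (Suc n)) * (real (Suc n) * dist x y)" by simp
  also have "\<dots> \<le> (1 / real (Suc n)) * real (Mn n x y)" by (intro mult_left_mono Mn_ge) simp
  finally show ?thesis using M by (simp only: pos_divide_le_eq)
qed

lemma invM: assumes xy: "x \<noteq> y" shows "1 / real (Mn n x y) \<le> 1 / (real (Suc n) * dist x y)"
proof -
  have p: "0 < real (Suc n) * dist x y" using xy by simp
  show ?thesis using Mn_ge[of n x y] p by (intro divide_left_mono) auto
qed

lemma PP_disc: "disc 0 (Mn n x y) x y (PP n x y)"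
proof (cases "x = y")
  case True
  then have "disc 0 (Mn n x y) x y (\<lambda>_. x)" by (simp add: Mn_0 disc_const)
  then have "\<exists>p. disc 0 (Mn n x y) x y p" by blast
  from someI_ex[OF this] show ?thesis unfolding PP_def .
next
  case False
  have "\<exists>p. disc 0 (Mn n x y) x y p" by (rule disc_ex[OF Mn_pos[OF False]])
  from someI_ex[OF this] show ?thesis unfolding PP_def .
qed

lemma PP0: "PP n x y 0 = x" and PPM: "PP n x y (Mn n x y) = y"
  using PP_disc[of n x y] by (auto simp: disc_def)

lemma idx_props:
  assumes t: "0 \<le> t" "t \<le> 1"
  shows "idx M t \<le> M" "real (idx M t) \<le> t * real M" "t * real M < real (idx M t) + 1"
proof -
  have tM: "0 \<le> t * real M" "t * real M \<le> real M" using t by (auto simp: mult_left_le_one_le)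
  have f0: "0 \<le> \<lfloor>t * real M\<rfloor>" using tM by simp
  have "of_int \<lfloor>t * real M\<rfloor> \<le> real M" using tM(2) of_int_floor_le[of "t * real M"] by linarith
  then have fM: "nat \<lfloor>t * real M\<rfloor> \<le> M" by linarith
  have e: "idx M t = nat \<lfloor>t * real M\<rfloor>" unfolding idx_def using fM by simp
  have r: "real (idx M t) = of_int \<lfloor>t * real M\<rfloor>" unfolding e using f0 by simp
  show "idx M t \<le> M" using e fM by simp
  show "real (idx M t) \<le> t * real M" unfolding r by simp
  show "t * real M < real (idx M t) + 1" unfolding r by linarith
qed

lemma idx0: "idx M 0 = 0" by (simp add: idx_def)
lemma idx1: "idx M 1 = M" by (simp add: idx_def)
lemma idx_0M: "idx 0 t = 0" by (simp add: idx_def)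

lemma FF_eq: "FF n (x,y,t) = PP n x y (idx (Mn n x y) t)" by (simp add: FF_def)

lemma FF_in: "FF n (x,y,t) \<in> cball x (dist x y)"
proof (cases "x = y")
  case True
  then show ?thesis by (simp add: FF_eq Mn_0 idx_0M PP0)
next
  case False
  define M where "M = Mn n x y"
  have M: "0 < M" using Mn_pos[OF False] by (simp add: M_def)
  have i: "idx M t \<le> M" by (simp add: idx_def)
  have "dist (PP n x y 0) (PP n x y (idx M t)) = real (idx M t - 0) * dist x y / real M"
    using disc_geo[OF PP_disc[of n x y, folded M_def] M _ i] by simp
  also have "\<dots> \<le> dist x y"
  proof -
    have "real (idx M t) * dist x y \<le> real M * dist x y" by (rule mult_right_mono) (use i in auto)
    then have "real (idx M t - 0) * dist x y \<le> dist x y * real M" by (simp add: mult.commute)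
    then show ?thesis using M by (simp only: pos_divide_le_eq of_nat_0_less_iff)
  qed
  finally show ?thesis by (simp add: FF_eq M_def PP0)
qed

lemma FF_in': "FF n z \<in> cball (fst z) (dist (fst z) (fst (snd z)))"
  using FF_in[of n "fst z" "fst (snd z)" "snd (snd z)"] by simp

definition gl :: "'a \<times> 'a \<times> real \<Rightarrow> 'a" where
  "gl = (SOME g. \<forall>\<epsilon>>0. \<forall>N. \<forall>z1 z2 z3 z4. \<exists>n\<ge>N. dist (FF n z1) (g z1) < \<epsilon> \<and> dist (FF n z2) (g z2) < \<epsilon>
            \<and> dist (FF n z3) (g z3) < \<epsilon> \<and> dist (FF n z4) (g z4) < \<epsilon>)"

lemma gl_all: "\<forall>\<epsilon>>0. \<forall>N. \<forall>z1 z2 z3 z4. \<exists>n\<ge>N. dist (FF n z1) (gl z1) < \<epsilon> \<and> dist (FF n z2) (gl z2) < \<epsilon>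
            \<and> dist (FF n z3) (gl z3) < \<epsilon> \<and> dist (FF n z4) (gl z4) < \<epsilon>"
proof -
  have ex: "\<exists>g. \<forall>\<epsilon>>0. \<forall>N. \<forall>z1 z2 z3 z4. \<exists>n\<ge>N. dist (FF n z1) (g z1) < \<epsilon> \<and> dist (FF n z2) (g z2) < \<epsilon>
            \<and> dist (FF n z3) (g z3) < \<epsilon> \<and> dist (FF n z4) (g z4) < \<epsilon>"
    apply (rule cluster_exists[of "\<lambda>z. cball (fst z) (dist (fst z) (fst (snd z)))"])
    subgoal by (simp add: cball_compact)
    subgoal by (rule FF_in')
    done
  from someI_ex[OF ex] show ?thesis unfolding gl_def .
qed

lemmas gl = gl_all[rule_format]

lemma gl1: "\<epsilon> > 0 \<Longrightarrow> \<exists>n\<ge>N. dist (FF n z1) (gl z1) < \<epsilon>"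
  using gl[of \<epsilon> N z1 z1 z1 z1] by simp

lemma gl2: "\<epsilon> > 0 \<Longrightarrow> \<exists>n\<ge>N. dist (FF n z1) (gl z1) < \<epsilon> \<and> dist (FF n z2) (gl z2) < \<epsilon>"
  using gl[of \<epsilon> N z1 z2 z2 z2] by simp

lemma const_lim:
  assumes "\<And>n. FF n z = w"
  shows "gl z = w"
proof -
  have "dist (gl z) w \<le> 0"
  proof (rule lim_le[where C=0])
    fix \<epsilon> :: real and N :: nat assume "\<epsilon> > 0"
    then obtain n where "n \<ge> N" "dist (FF n z) (gl z) < \<epsilon>" using gl1 by blast
    then show "\<exists>n\<ge>N. dist (gl z) w \<le> 0 + \<epsilon> + 0 / real (Suc n)" using assms by (auto simp: dist_commute)
  qed
  then show ?thesis by simp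
qed

lemma s0: "gl (x,y,0) = x"
  by (rule const_lim) (simp add: FF_eq idx0 PP0)

lemma s1: "gl (x,y,1) = y"
  by (rule const_lim) (simp add: FF_eq idx1 PPM)

lemma sxx: "gl (x,x,t) = x"
  by (rule const_lim) (simp add: FF_eq Mn_0 idx_0M PP0)

lemma dgeo:
  assumes xy: "x \<noteq> y" and a: "0 \<le> a" "a \<le> 1" and b: "0 \<le> b" "b \<le> 1"
  shows "\<bar>dist (FF n (x,y,a)) (FF n (x,y,b)) - \<bar>a-b\<bar> * dist x y\<bar> \<le> 1 / real (Suc n)"
proof -
  define M where "M = Mn n x y"
  define D where "D = dist x y"
  have M: "0 < M" using Mn_pos[OF xy] by (simp add: M_def)
  note ia = idx_props[OF a, of M] and ib = idx_props[OF b, of M]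
  define i where "i = idx M a"
  define j where "j = idx M b"
  have d: "dist (FF n (x,y,a)) (FF n (x,y,b)) = \<bar>real i - real j\<bar> * D / real M"
    unfolding FF_eq M_def[symmetric] i_def j_def D_def
    by (rule disc_geo_abs[OF PP_disc[of n x y, folded M_def] M]) (use ia ib in auto)
  have k: "\<bar>\<bar>real i - real j\<bar> - \<bar>a-b\<bar> * real M\<bar> \<le> 1"
  proof -
    have "\<bar>(real i - real j) - (a-b) * real M\<bar> \<le> 1" using ia ib unfolding i_def j_def by (simp add: algebra_simps)
    moreover have "\<bar>a-b\<bar> * real M = \<bar>(a-b) * real M\<bar>" by (simp add: abs_mult)
    ultimately show ?thesis by linarith
  qed
  have "\<bar>real i - real j\<bar> * D / real M - \<bar>a-b\<bar> * D = (\<bar>real i - real j\<bar> - \<bar>a-b\<bar> * real M) * (D / real M)"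
    using M by (simp add: field_simps)
  then have "\<bar>\<bar>real i - real j\<bar> * D / real M - \<bar>a-b\<bar> * D\<bar> = \<bar>\<bar>real i - real j\<bar> - \<bar>a-b\<bar> * real M\<bar> * (D / real M)"
    by (simp add: abs_mult D_def)
  also have "\<dots> \<le> 1 * (D / real M)" using k by (intro mult_right_mono) (auto simp: D_def)
  also have "\<dots> \<le> 1 / real (Suc n)" using DM[OF xy, of n] by (simp add: D_def M_def)
  finally show ?thesis using d D_def by simp
qed

lemma s_geo:
  assumes a: "0 \<le> a" "a \<le> 1" and b: "0 \<le> b" "b \<le> 1"
  shows "dist (gl (x,y,a)) (gl (x,y,b)) = \<bar>a-b\<bar> * dist x y"
proof (cases "x = y")
  case True then show ?thesis by (simp add: sxx)
next
  case False
  have up: "dist (gl (x,y,a)) (gl (x,y,b)) \<le> \<bar>a-b\<bar> * dist x y"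
  proof (rule lim_le[where C=1])
    fix \<epsilon> :: real and N :: nat assume e: "\<epsilon> > 0"
    then obtain n where n: "n \<ge> N" "dist (FF n (x,y,a)) (gl (x,y,a)) < \<epsilon>/2" "dist (FF n (x,y,b)) (gl (x,y,b)) < \<epsilon>/2"
      using gl2[of "\<epsilon>/2"] by fastforce
    have "dist (gl (x,y,a)) (gl (x,y,b)) \<le> dist (gl (x,y,a)) (FF n (x,y,a)) + dist (FF n (x,y,a)) (FF n (x,y,b)) + dist (FF n (x,y,b)) (gl (x,y,b))"
      by (meson dist_triangle order_trans add_right_mono)
    then show "\<exists>n\<ge>N. dist (gl (x,y,a)) (gl (x,y,b)) \<le> \<bar>a-b\<bar> * dist x y + \<epsilon> + 1 / real (Suc n)"
      using n dgeo[OF False a b, of n] by (intro exI[of _ n]) (auto simp: dist_commute)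
  qed
  have lo: "- dist (gl (x,y,a)) (gl (x,y,b)) \<le> - (\<bar>a-b\<bar> * dist x y)"
  proof (rule lim_le[where C=1])
    fix \<epsilon> :: real and N :: nat assume e: "\<epsilon> > 0"
    then obtain n where n: "n \<ge> N" "dist (FF n (x,y,a)) (gl (x,y,a)) < \<epsilon>/2" "dist (FF n (x,y,b)) (gl (x,y,b)) < \<epsilon>/2"
      using gl2[of "\<epsilon>/2"] by fastforce
    have "dist (FF n (x,y,a)) (FF n (x,y,b)) \<le> dist (FF n (x,y,a)) (gl (x,y,a)) + dist (gl (x,y,a)) (gl (x,y,b)) + dist (gl (x,y,b)) (FF n (x,y,b))"
      by (meson dist_triangle order_trans add_right_mono)
    then show "\<exists>n\<ge>N. - dist (gl (x,y,a)) (gl (x,y,b)) \<le> - (\<bar>a-b\<bar> * dist x y) + \<epsilon> + 1 / real (Suc n)"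
      using n dgeo[OF False a b, of n] by (intro exI[of _ n]) (auto simp: dist_commute)
  qed
  show ?thesis using up lo by linarith
qed

end

lemma interp:
  fixes A B t :: real
  assumes M: "0 < M" and it: "real i \<le> t * real M" "t * real M < real i + 1" and AB: "0 \<le> A" "0 \<le> B"
  shows "((real M - real i) * A + real i * B) / real M \<le> (1-t)*A + t*B + (A+B)/real M"
proof -
  define \<delta> where "\<delta> = t * real M - real i"
  have d: "0 \<le> \<delta>" "\<delta> \<le> 1" using it by (auto simp: \<delta>_def)
  have Mz: "real M \<noteq> 0" using M by simp
  have eq: "((real M - real i) * A + real i * B) / real M = (1-t)*A + t*B + (\<delta>*A - \<delta>*B)/real M"
    unfolding \<delta>_def using Mz by (simp add: field_simps)
  have "\<delta>*A \<le> A" using d AB by (simp add: mult_left_le_one_le)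
  moreover have "0 \<le> \<delta>*B" using d AB by simp
  ultimately have "\<delta>*A - \<delta>*B \<le> A + B" using AB by linarith
  then have "(\<delta>*A - \<delta>*B)/real M \<le> (A+B)/real M" using M by (simp add: divide_right_mono)
  then show ?thesis unfolding eq by linarith
qed

lemma tri3: "dist (a::'a::metric_space) d \<le> dist a b + dist b c + dist c d"
proof -
  have "dist a d \<le> dist a b + dist b d" by (rule dist_triangle)
  moreover have "dist b d \<le> dist b c + dist c d" by (rule dist_triangle)
  ultimately show ?thesis by linarith
qed

context cb begin

lemma s_cmp:
  assumes eq: "dist x y = dist x' y'" and t: "0 \<le> t" "t \<le> 1"
  shows "dist (gl (x,y,t)) (gl (x',y',t)) \<le> (1-t) * dist x x' + t * dist y y'"
proof (cases "x = y")
  case True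
  then have "x' = y'" using eq by simp
  then show ?thesis using True by (simp add: sxx algebra_simps)
next
  case False
  define A where "A = dist x x'"
  define B where "B = dist y y'"
  define D where "D = dist x y"
  have D: "0 < D" using False by (simp add: D_def)
  show ?thesis unfolding A_def[symmetric] B_def[symmetric]
  proof (rule lim_le[where C="(A+B)/D"])
    fix \<epsilon> :: real and N :: nat assume e: "\<epsilon> > 0"
    then obtain n where n: "n \<ge> N" "dist (FF n (x,y,t)) (gl (x,y,t)) < \<epsilon>/2" "dist (FF n (x',y',t)) (gl (x',y',t)) < \<epsilon>/2"
      using gl2[of "\<epsilon>/2"] by fastforce
    define M where "M = Mn n x y"
    have MM: "Mn n x' y' = M" unfolding M_def Mn_def using eq by simp
    have M: "0 < M" using Mn_pos[OF False] by (simp add: M_def)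
    note ip = idx_props[OF t, of M]
    define i where "i = idx M t"
    have "dist (FF n (x,y,t)) (FF n (x',y',t)) \<le> ((real M - real i) * A + real i * B) / real M"
      unfolding FF_eq M_def[symmetric] MM i_def A_def B_def
      using disc_cmp[OF PP_disc[of n x y, folded M_def] PP_disc[of n x' y', unfolded MM] M ip(1)] .
    also have "\<dots> \<le> (1-t)*A + t*B + (A+B)/real M"
      by (rule interp[OF M]) (use ip in \<open>auto simp: i_def A_def B_def\<close>)
    also have "(A+B)/real M \<le> ((A+B)/D) / real (Suc n)"
    proof -
      have "(A+B)/real M = (A+B) * (1 / real M)" by simp
      also have "\<dots> \<le> (A+B) * (1 / (real (Suc n) * D))"
        using invM[OF False, of n] by (intro mult_left_mono) (auto simp: A_def B_def M_def D_def)
      also have "\<dots> = ((A+B)/D) / real (Suc n)" by simp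
      finally show ?thesis .
    qed
    finally have d: "dist (FF n (x,y,t)) (FF n (x',y',t)) \<le> (1-t)*A + t*B + ((A+B)/D) / real (Suc n)" by simp
    have "dist (gl (x,y,t)) (gl (x',y',t)) \<le> dist (gl (x,y,t)) (FF n (x,y,t)) + dist (FF n (x,y,t)) (FF n (x',y',t)) + dist (FF n (x',y',t)) (gl (x',y',t))"
      by (rule tri3)
    then show "\<exists>n\<ge>N. dist (gl (x,y,t)) (gl (x',y',t)) \<le> (1-t)*A + t*B + \<epsilon> + ((A+B)/D) / real (Suc n)"
      using n d by (intro exI[of _ n]) (auto simp: dist_commute)
  qed
qed

lemma s_pt:
  assumes t: "0 \<le> t" "t \<le> 1"
  shows "dist (gl (x,y,t)) z \<le> (1-t) * dist x z + t * dist y z"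
proof (cases "x = y")
  case True
  then show ?thesis by (simp add: sxx algebra_simps)
next
  case False
  define A where "A = dist x z"
  define B where "B = dist y z"
  define D where "D = dist x y"
  have D: "0 < D" using False by (simp add: D_def)
  show ?thesis unfolding A_def[symmetric] B_def[symmetric]
  proof (rule lim_le[where C="(A+B)/D"])
    fix \<epsilon> :: real and N :: nat assume e: "\<epsilon> > 0"
    then obtain n where n: "n \<ge> N" "dist (FF n (x,y,t)) (gl (x,y,t)) < \<epsilon>"
      using gl1[of \<epsilon>] by fastforce
    define M where "M = Mn n x y"
    have M: "0 < M" using Mn_pos[OF False] by (simp add: M_def)
    note ip = idx_props[OF t, of M]
    define i where "i = idx M t"
    have "dist (FF n (x,y,t)) z \<le> ((real M - real i) * A + real i * B) / real M"
      unfolding FF_eq M_def[symmetric] i_def A_def B_def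
      using disc_pt[OF PP_disc[of n x y, folded M_def] M ip(1)] .
    also have "\<dots> \<le> (1-t)*A + t*B + (A+B)/real M"
      by (rule interp[OF M]) (use ip in \<open>auto simp: i_def A_def B_def\<close>)
    also have "(A+B)/real M \<le> ((A+B)/D) / real (Suc n)"
    proof -
      have "(A+B)/real M = (A+B) * (1 / real M)" by simp
      also have "\<dots> \<le> (A+B) * (1 / (real (Suc n) * D))"
        using invM[OF False, of n] by (intro mult_left_mono) (auto simp: A_def B_def M_def D_def)
      also have "\<dots> = ((A+B)/D) / real (Suc n)" by simp
      finally show ?thesis .
    qed
    finally have d: "dist (FF n (x,y,t)) z \<le> (1-t)*A + t*B + ((A+B)/D) / real (Suc n)" by simp
    have "dist (gl (x,y,t)) z \<le> dist (gl (x,y,t)) (FF n (x,y,t)) + dist (FF n (x,y,t)) z"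
      by (rule dist_triangle)
    then show "\<exists>n\<ge>N. dist (gl (x,y,t)) z \<le> (1-t)*A + t*B + \<epsilon> + ((A+B)/D) / real (Suc n)"
      using n d by (intro exI[of _ n]) (auto simp: dist_commute)
  qed
qed

lemma s_rev:
  assumes t: "0 \<le> t" "t \<le> 1"
  shows "gl (y,x,1-t) = gl (x,y,t)"
proof (cases "x = y")
  case True then show ?thesis by (simp add: sxx)
next
  case False
  have t': "0 \<le> 1-t" "1-t \<le> 1" using t by auto
  have "dist (gl (y,x,1-t)) (gl (x,y,t)) \<le> 0"
  proof (rule lim_le[where C=8])
    fix \<epsilon> :: real and N :: nat assume e: "\<epsilon> > 0"
    then obtain n where n: "n \<ge> N" "dist (FF n (y,x,1-t)) (gl (y,x,1-t)) < \<epsilon>/2" "dist (FF n (x,y,t)) (gl (x,y,t)) < \<epsilon>/2"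
      using gl2[of "\<epsilon>/2"] by fastforce
    define M where "M = Mn n x y"
    have MM: "Mn n y x = M" unfolding M_def by (rule Mn_sym)
    have M: "0 < M" using Mn_pos[OF False] by (simp add: M_def)
    define p where "p = PP n x y"
    define r where "r = PP n y x"
    have pd: "disc 0 M x y p" using PP_disc[of n x y] by (simp add: M_def p_def)
    have rd: "disc 0 M y x r" using PP_disc[of n y x] by (simp add: MM r_def)
    have revd: "disc (0+M+1) M y x (\<lambda>l. p (M-l))" by (rule disc_rev[OF pd])
    note ip = idx_props[OF t, of M] and ip' = idx_props[OF t', of M]
    define i where "i = idx M t"
    define i' where "i' = idx M (1-t)"
    have iM: "i \<le> M" "i' \<le> M" using ip ip' by (auto simp: i_def i'_def)
    have c: "dist (r i') (p (M - (M - i))) \<le> dist y y + dist x x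
       + (\<bar>real M - real M\<bar> + \<bar>real i' - real (M - i)\<bar> + 6) * (dist y x / real M)"
      by (rule cross[OF rd revd M M]) (use iM in auto)
    have k: "\<bar>real i' - real (M - i)\<bar> \<le> 2"
    proof -
      have "real (M - i) = real M - real i" using iM by (simp add: of_nat_diff)
      moreover have "real i + real i' \<le> real M" "real M < real i + real i' + 2"
        using ip ip' unfolding i_def i'_def by (auto simp: algebra_simps)
      ultimately show ?thesis by linarith
    qed
    have "dist (r i') (p i) \<le> (\<bar>real i' - real (M - i)\<bar> + 6) * (dist y x / real M)"
      using c iM by simp
    also have "\<dots> \<le> 8 * (dist y x / real M)"
      by (rule mult_right_mono) (use k in auto)
    also have "\<dots> \<le> 8 / real (Suc n)" using DM[OF False, of n] by (simp add: M_def dist_commute)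
    finally have d: "dist (FF n (y,x,1-t)) (FF n (x,y,t)) \<le> 8 / real (Suc n)"
      by (simp add: FF_eq MM M_def[symmetric] p_def r_def i_def i'_def)
    have "dist (gl (y,x,1-t)) (gl (x,y,t)) \<le> dist (gl (y,x,1-t)) (FF n (y,x,1-t)) + dist (FF n (y,x,1-t)) (FF n (x,y,t)) + dist (FF n (x,y,t)) (gl (x,y,t))"
      by (rule tri3)
    then show "\<exists>n\<ge>N. dist (gl (y,x,1-t)) (gl (x,y,t)) \<le> 0 + \<epsilon> + 8 / real (Suc n)"
      using n d by (intro exI[of _ n]) (auto simp: dist_commute)
  qed
  then show ?thesis by simp
qed

end

context cb begin

lemma s_cons:
  assumes ab: "0 \<le> a" "a < b" "b \<le> 1" and t: "0 \<le> t" "t \<le> 1"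
  shows "gl (gl (x,y,a), gl (x,y,b), t) = gl (x,y, a + t*(b-a))"
proof (cases "x = y")
  case True then show ?thesis by (simp add: sxx)
next
  case False
  define p where "p = gl (x,y,a)"
  define q where "q = gl (x,y,b)"
  define c where "c = a + t*(b-a)"
  define D where "D = dist x y"
  have D: "0 < D" using False by (simp add: D_def)
  have tba: "t*(b-a) \<le> b - a" using t ab by (simp add: mult_left_le_one_le)
  have tba0: "0 \<le> t*(b-a)" using t ab by simp
  have c: "0 \<le> c" "c \<le> 1" "a \<le> c" "c \<le> b" unfolding c_def using ab tba tba0 by linarith+
  have a1: "0 \<le> a" "a \<le> 1" and b1: "0 \<le> b" "b \<le> 1" using ab by auto
  have pq: "dist p q = (b-a)*D" unfolding p_def q_def D_def using s_geo[OF a1 b1, of x y] ab by simp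
  have pq0: "p \<noteq> q" using pq ab D by auto
  have baD: "0 < (b-a)*D" using ab D by simp
  obtain N0 :: nat where N0: "real N0 > 1/((b-a)*D)" using reals_Archimedean2 by blast
  have "dist (gl (p,q,t)) (gl (x,y,c)) \<le> 0"
  proof (rule lim_le[where C=11])
    fix \<epsilon> :: real and N :: nat assume e: "\<epsilon> > 0"
    then obtain n where n: "n \<ge> max N N0" "dist (FF n (x,y,a)) (gl (x,y,a)) < \<epsilon>/4"
      "dist (FF n (x,y,b)) (gl (x,y,b)) < \<epsilon>/4" "dist (FF n (x,y,c)) (gl (x,y,c)) < \<epsilon>/4"
      "dist (FF n (p,q,t)) (gl (p,q,t)) < \<epsilon>/4"
      using gl[of "\<epsilon>/4" "max N N0" "(x,y,a)" "(x,y,b)" "(x,y,c)" "(p,q,t)"] by auto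
    define M where "M = Mn n x y"
    define M' where "M' = Mn n p q"
    define Pn where "Pn = PP n x y"
    define R where "R = PP n p q"
    have M: "0 < M" using Mn_pos[OF False] by (simp add: M_def)
    have M': "0 < M'" using Mn_pos[OF pq0] by (simp add: M'_def)
    have Pd: "disc 0 M x y Pn" using PP_disc[of n x y] by (simp add: M_def Pn_def)
    have Rd: "disc 0 M' p q R" using PP_disc[of n p q] by (simp add: M'_def R_def)
    note ia = idx_props[OF a1, of M] and ib = idx_props[OF b1, of M]
      and ic = idx_props[OF c(1,2), of M] and it = idx_props[OF t, of M']
    define i where "i = idx M a"
    define j where "j = idx M b"
    define l where "l = idx M c"
    define l' where "l' = idx M' t"
    define X where "X = real (Suc n) * D"
    have MX: "X \<le> real M" "real M < X + 1" using Mn_ge[of n x y] Mn_lt[of n x y] by (auto simp: X_def M_def D_def)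
    have MX': "(b-a)*X \<le> real M'" "real M' < (b-a)*X + 1"
      using Mn_ge[of n p q] Mn_lt[of n p q] pq by (auto simp: X_def M'_def algebra_simps)
    have big: "(b-a)*X > 1"
    proof -
      have "real (Suc n) > 1/((b-a)*D)" using N0 n(1) by simp
      then have "real (Suc n) * ((b-a)*D) > 1" using baD by (simp add: field_simps)
      then show ?thesis by (simp add: X_def algebra_simps)
    qed
    define u where "u = (b-a) * real M"
    have u: "(b-a)*X \<le> u" "u \<le> (b-a)*X + 1"
    proof -
      show "(b-a)*X \<le> u" unfolding u_def using MX ab by (intro mult_left_mono) auto
      have "u \<le> (b-a)*(X+1)" unfolding u_def using MX ab by (intro mult_left_mono) auto
      also have "\<dots> \<le> (b-a)*X + 1" using ab by (simp add: algebra_simps)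
      finally show "u \<le> (b-a)*X + 1" .
    qed
    have aMc: "a * real M \<le> c * real M" "c * real M \<le> b * real M" using c by (auto intro: mult_right_mono)
    have il: "i \<le> l"
    proof -
      have "real i < real l + 1" using ia ic aMc unfolding i_def l_def by linarith
      then show ?thesis by linarith
    qed
    have lj: "l \<le> j"
    proof -
      have "real l < real j + 1" using ib ic aMc unfolding j_def l_def by linarith
      then show ?thesis by linarith
    qed
    have bMaM: "b * real M - a * real M = u" by (simp add: u_def algebra_simps)
    have ji: "i < j"
    proof -
      have "real j > b * real M - 1" "real i \<le> a * real M" using ia ib unfolding i_def j_def by auto
      then have "real j - real i > u - 1" using bMaM by linarith
      then show ?thesis using u big by linarith
    qed
    have jM: "j \<le> M" using ib by (simp add: j_def)
    have Qd: "disc (0+i) (j-i) (Pn i) (Pn j) (\<lambda>m. Pn (m+i))"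
      by (rule disc_shift[OF Pd]) (use ji jM in auto)
    have cr: "dist (Pn (l-i+i)) (R l') \<le> dist (Pn i) p + dist (Pn j) q
       + (\<bar>real (j-i) - real M'\<bar> + \<bar>real (l-i) - real l'\<bar> + 6) * (dist p q / real M')"
      using cross[OF Qd Rd _ M', of "l-i" l'] ji lj il it by (simp add: l'_def)
    have k1: "\<bar>real (j-i) - real M'\<bar> \<le> 2"
    proof -
      have "real (j-i) = real j - real i" using ji by (simp add: of_nat_diff)
      moreover have "real j - real i > u - 1" "real j - real i < u + 1"
        using ia ib bMaM unfolding i_def j_def by linarith+
      ultimately show ?thesis using u MX' by linarith
    qed
    have k2: "\<bar>real (l-i) - real l'\<bar> \<le> 3"
    proof -
      have "real (l-i) = real l - real i" using il by (simp add: of_nat_diff)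
      have cMaM: "c * real M - a * real M = t * u" by (simp add: c_def u_def algebra_simps)
      have "\<bar>t*u - t*real M'\<bar> \<le> 1"
      proof -
        have "\<bar>t*u - t*real M'\<bar> = t * \<bar>u - real M'\<bar>" using t by (simp add: abs_mult algebra_simps[symmetric] right_diff_distrib[symmetric])
        also have "\<dots> \<le> 1 * 1" using t u MX' by (intro mult_mono) auto
        finally show ?thesis by simp
      qed
      moreover have "real l - real i > t*u - 1" "real l - real i < t*u + 1"
        using ia ic cMaM unfolding i_def l_def by linarith+
      moreover have "real l' \<le> t * real M'" "t * real M' < real l' + 1" using it by (auto simp: l'_def)
      ultimately show ?thesis using \<open>real (l-i) = real l - real i\<close> by linarith
    qed
    have "dist (Pn l) (R l') \<le> \<epsilon>/4 + \<epsilon>/4 + 11 * (dist p q / real M')"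
    proof -
      have "(\<bar>real (j-i) - real M'\<bar> + \<bar>real (l-i) - real l'\<bar> + 6) * (dist p q / real M') \<le> 11 * (dist p q / real M')"
        by (rule mult_right_mono) (use k1 k2 in auto)
      moreover have "dist (Pn i) p < \<epsilon>/4" "dist (Pn j) q < \<epsilon>/4"
        using n by (simp_all add: FF_eq Pn_def M_def i_def j_def p_def q_def)
      moreover have "l - i + i = l" using il by simp
      ultimately show ?thesis using cr by simp
    qed
    also have "11 * (dist p q / real M') \<le> 11 / real (Suc n)"
      using DM[OF pq0, of n] by (simp add: M'_def)
    finally have d: "dist (FF n (x,y,c)) (FF n (p,q,t)) \<le> \<epsilon>/2 + 11 / real (Suc n)"
      by (simp add: FF_eq Pn_def M_def l_def R_def M'_def l'_def)
    have "dist (gl (p,q,t)) (gl (x,y,c)) \<le> dist (gl (p,q,t)) (FF n (p,q,t)) + dist (FF n (p,q,t)) (FF n (x,y,c)) + dist (FF n (x,y,c)) (gl (x,y,c))"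
      by (rule tri3)
    then show "\<exists>n\<ge>N. dist (gl (p,q,t)) (gl (x,y,c)) \<le> 0 + \<epsilon> + 11 / real (Suc n)"
      using n d by (intro exI[of _ n]) (auto simp: dist_commute)
  qed
  then show ?thesis by (simp add: p_def q_def c_def)
qed

end

context cb begin

lemma seg:
  assumes t1: "0 \<le> t1" "t1 \<le> 1" and t2: "0 \<le> t2" "t2 \<le> 1" and v: "0 \<le> v" "v \<le> 1"
  shows "gl (x,y,(1 - v) * t1 + v * t2) = gl (gl (x,y,t1), gl (x,y,t2), v)"
proof (cases t1 t2 rule: linorder_cases)
  case less
  have "gl (gl (x,y,t1), gl (x,y,t2), v) = gl (x,y,t1 + v *(t2-t1))" by (rule s_cons) (use t1 t2 v less in auto)
  moreover have "t1 + v *(t2-t1) = (1 - v) * t1 + v * t2" by (simp add: algebra_simps)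
  ultimately show ?thesis by simp
next
  case equal
  then show ?thesis by (simp add: sxx algebra_simps)
next
  case greater
  have v': "0 \<le> 1-v" "1-v \<le> 1" using v by auto
  have "gl (gl (x,y,t2), gl (x,y,t1), 1-v) = gl (x,y,t2 + (1-v)*(t1-t2))" by (rule s_cons) (use t1 t2 v greater in auto)
  moreover have "t2 + (1-v)*(t1-t2) = (1 - v) * t1 + v * t2" by (simp add: algebra_simps)
  moreover have "gl (gl (x,y,t2), gl (x,y,t1), 1-v) = gl (gl (x,y,t1), gl (x,y,t2), 1-(1-v))"
    by (rule s_rev[symmetric]) (use v in auto)
  ultimately show ?thesis by simp
qed

lemma main:
  "\<exists>s :: 'a \<Rightarrow> 'a \<Rightarrow> real \<Rightarrow> 'a. bicombing s \<and> consistent s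
           \<and> (\<forall>x y. straight (s x y))
           \<and> (\<forall>x y x' y'. dist x y = dist x' y' \<longrightarrow>
                 convex_on {0..1} (\<lambda>t. dist (s x y t) (s x' y' t)))"
proof (intro exI conjI allI impI)
  define S where "S x y t = gl (x,y,t)" for x y t
  show "bicombing S" unfolding bicombing_def geodesic01_def S_def
    using s0 s1 s_geo by auto
  show "consistent S" unfolding consistent_def
  proof (intro allI impI subsetI)
    fix x y p q w
    assume pq: "p \<in> S x y ` {0..1} \<and> q \<in> S x y ` {0..1}" and w: "w \<in> S p q ` {0..1}"
    obtain a b where ab: "a \<in> {0..1}" "b \<in> {0..1}" "p = gl (x,y,a)" "q = gl (x,y,b)"
      using pq unfolding S_def by auto
    obtain t where t: "t \<in> {0..1}" "w = gl (p,q,t)" using w unfolding S_def by auto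
    have "w = gl (x,y,(1 - t) * a + t * b)" using seg[of a b t x y] ab t by simp
    moreover have "(1 - t) * a + t * b \<in> {0..1}"
    proof -
      have "(1 - t) * a + t * b \<le> (1-t)*1 + t*1" using ab t by (intro add_mono mult_left_mono) auto
      moreover have "0 \<le> (1 - t) * a + t * b" using ab t by simp
      ultimately show ?thesis by simp
    qed
    ultimately show "w \<in> S x y ` {0..1}" unfolding S_def by auto
  qed
  fix x y
  show "straight (S x y)" unfolding straight_def
  proof
    fix z
    show "convex_on {0..1} (\<lambda>t. dist z (S x y t))" unfolding convex_on_def
    proof (intro conjI ballI allI impI)
      show "convex {0..1::real}" by (rule convex_real_interval)
      fix t1 t2 :: real and u v :: real
      assume t12: "t1 \<in> {0..1}" "t2 \<in> {0..1}" and uv: "0 \<le> u" "0 \<le> v" "u + v = 1"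
      have u: "u = 1 - v" using uv by simp
      have "dist z (S x y (u *\<^sub>R t1 + v *\<^sub>R t2)) = dist (gl (gl (x,y,t1), gl (x,y,t2), v)) z"
        using seg[of t1 t2 v x y] t12 uv unfolding S_def u by (simp add: dist_commute)
      also have "\<dots> \<le> (1-v) * dist (gl (x,y,t1)) z + v * dist (gl (x,y,t2)) z"
        by (rule s_pt) (use uv in auto)
      finally show "dist z (S x y (u *\<^sub>R t1 + v *\<^sub>R t2)) \<le> u * dist z (S x y t1) + v * dist z (S x y t2)"
        unfolding S_def u by (simp add: dist_commute)
    qed
  qed
  fix x' y' :: 'a
  assume eq: "dist x y = dist x' y'"
  show "convex_on {0..1} (\<lambda>t. dist (S x y t) (S x' y' t))" unfolding convex_on_def
  proof (intro conjI ballI allI impI)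
    show "convex {0..1::real}" by (rule convex_real_interval)
    fix t1 t2 :: real and u v :: real
    assume t12: "t1 \<in> {0..1}" "t2 \<in> {0..1}" and uv: "0 \<le> u" "0 \<le> v" "u + v = 1"
    have u: "u = 1 - v" using uv by simp
    have e1: "S x y (u *\<^sub>R t1 + v *\<^sub>R t2) = gl (gl (x,y,t1), gl (x,y,t2), v)"
      using seg[of t1 t2 v x y] t12 uv unfolding S_def u by simp
    have e2: "S x' y' (u *\<^sub>R t1 + v *\<^sub>R t2) = gl (gl (x',y',t1), gl (x',y',t2), v)"
      using seg[of t1 t2 v x' y'] t12 uv unfolding S_def u by simp
    have len: "dist (gl (x,y,t1)) (gl (x,y,t2)) = dist (gl (x',y',t1)) (gl (x',y',t2))"
      using s_geo[of t1 t2 x y] s_geo[of t1 t2 x' y'] t12 eq by simp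
    have "dist (gl (gl (x,y,t1), gl (x,y,t2), v)) (gl (gl (x',y',t1), gl (x',y',t2), v))
        \<le> (1-v) * dist (gl (x,y,t1)) (gl (x',y',t1)) + v * dist (gl (x,y,t2)) (gl (x',y',t2))"
      by (rule s_cmp[OF len]) (use uv in auto)
    then show "dist (S x y (u *\<^sub>R t1 + v *\<^sub>R t2)) (S x' y' (u *\<^sub>R t1 + v *\<^sub>R t2))
        \<le> u * dist (S x y t1) (S x' y' t1) + v * dist (S x y t2) (S x' y' t2)"
      unfolding e1 e2 unfolding S_def u .
  qed
qed

end

theorem theorem1p5:
  fixes \<sigma> :: "'a::metric_space \<Rightarrow> 'a \<Rightarrow> real \<Rightarrow> 'a"
  assumes "proper_space TYPE('a)"
    and "bicombing \<sigma>" and "conical \<sigma>"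
  shows "\<exists>s :: 'a \<Rightarrow> 'a \<Rightarrow> real \<Rightarrow> 'a. bicombing s \<and> consistent s
           \<and> (\<forall>x y. straight (s x y))
           \<and> (\<forall>x y x' y'. dist x y = dist x' y' \<longrightarrow>
                 convex_on {0..1} (\<lambda>t. dist (s x y t) (s x' y' t)))"
proof -
  have "cb \<sigma>" using assms by (simp add: cb_def)
  then show ?thesis by (rule cb.main)
qed


end
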